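(* Let $(X,d,\mu)$ be a metric space with a Borel measure $\mu$ and fix $x\in X$. Suppose $\mathrm{vol}_\delta^x(l)<\infty$ for every $\delta>0$ and $l\in\mathbb N$, and that there is $\delta_0>0$ with $\limsup_{l\to\infty}\frac1l\log\mathrm{vol}_{\delta_0}^x(l)>0$. Then $h_\infty(X)=\infty$.
   Context: For $\delta>0$ a $\delta$-path is a sequence $(x_0,\dots,x_n)$ with $d(x_{i-1},x_i)\le\delta$; the $\delta$-component $[x]_\delta$ of $x$ is the set of points connected to $x$ by a $\delta$-path. For $x_0\in X$ and $n\in\mathbb N$, $B_\delta(x_0,n)=\{x_n\in X:\exists\ \delta\text{-path }(x_0,x_1,\dots,x_n)\}$. Define $\mathrm{vol}_\delta^x(l)=\sup_{x_0\in[x]_\delta}\mu(B_\delta(x_0,l))$. Coarse entropy $h_\infty(X)=\lim_{\delta\to\infty}\lim_{R\to\infty}\limsup_{n\to\infty}\frac1n\log s(n,R,\delta,x_0)$, where $s(n,R,\delta,x_0)$ is the supremum of cardinalities of $R$-separated sets of $\delta$-paths of length $n$ starting at $x_0$, paths compared by $\max_i d(x_i,y_i)$. *)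

theory Defs
  imports "HOL-Analysis.Analysis"
begin

definition dpath :: "real \<Rightarrow> 'a::metric_space \<Rightarrow> nat \<Rightarrow> 'a list \<Rightarrow> bool" where
  "dpath \<delta> x0 n p \<longleftrightarrow> length p = Suc n \<and> p ! 0 = x0 \<and>
     (\<forall>i<n. dist (p ! i) (p ! Suc i) \<le> \<delta>)"

definition dball :: "real \<Rightarrow> 'a::metric_space \<Rightarrow> nat \<Rightarrow> 'a set" where
  "dball \<delta> x0 n = {y. \<exists>p. dpath \<delta> x0 n p \<and> p ! n = y}"

definition dcomp :: "real \<Rightarrow> 'a::metric_space \<Rightarrow> 'a set" where
  "dcomp \<delta> x = {y. \<exists>n. y \<in> dball \<delta> x n}"

definition outer_mu :: "'a measure \<Rightarrow> 'a set \<Rightarrow> ennreal" where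
  "outer_mu \<mu> B = (INF A \<in> {A \<in> sets \<mu>. B \<subseteq> A}. emeasure \<mu> A)"

definition vol :: "'a::metric_space measure \<Rightarrow> real \<Rightarrow> 'a \<Rightarrow> nat \<Rightarrow> ennreal" where
  "vol \<mu> \<delta> x l = (SUP x0 \<in> dcomp \<delta> x. outer_mu \<mu> (dball \<delta> x0 l))"

definition eln :: "ereal \<Rightarrow> ereal" where
  "eln y = (if y = \<infinity> then \<infinity> else if y \<le> 0 then -\<infinity> else ereal (ln (real_of_ereal y)))"

definition pathdist :: "nat \<Rightarrow> 'a::metric_space list \<Rightarrow> 'a list \<Rightarrow> real" where
  "pathdist n p q = Max ((\<lambda>i. dist (p ! i) (q ! i)) ` {..n})"

definition separated_paths :: "real \<Rightarrow> real \<Rightarrow> 'a::metric_space \<Rightarrow> nat \<Rightarrow> 'a list set \<Rightarrow> bool" where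
  "separated_paths R \<delta> x0 n P \<longleftrightarrow> (\<forall>p\<in>P. dpath \<delta> x0 n p) \<and>
     (\<forall>p\<in>P. \<forall>q\<in>P. p \<noteq> q \<longrightarrow> pathdist n p q > R)"

definition sep_count :: "nat \<Rightarrow> real \<Rightarrow> real \<Rightarrow> 'a::metric_space \<Rightarrow> enat" where
  "sep_count n R \<delta> x0 = (SUP P \<in> {P. finite P \<and> separated_paths R \<delta> x0 n P}. enat (card P))"

definition enat_ln :: "enat \<Rightarrow> ereal" where
  "enat_ln k = eln (ereal_of_enat k)"

definition coarse_entropy :: "'a::metric_space \<Rightarrow> ereal" where
  "coarse_entropy x0 = Lim at_top (\<lambda>\<delta>::real. Lim at_top (\<lambda>R::real.
      limsup (\<lambda>n. ereal (1 / real n) * enat_ln (sep_count n R \<delta> x0))))"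

end

theory Submission
  imports Defs
begin


lemma dpath_mono: "dpath d x n p \<Longrightarrow> d \<le> d' \<Longrightarrow> dpath d' x n p"
  unfolding dpath_def by force

lemma dpath_dist:
  assumes "dpath d y l p" "a \<le> b" "b \<le> l"
  shows "dist (p!a) (p!b) \<le> real (b-a) * d"
  using assms(2,3)
proof (induction b)
  case 0 then show ?case by simp
next
  case (Suc b)
  show ?case
  proof (cases "a = Suc b")
    case True then show ?thesis by simp
  next
    case False
    then have ab: "a \<le> b" using Suc by simp
    have "dist (p!a) (p!Suc b) \<le> dist (p!a) (p!b) + dist (p!b) (p!Suc b)" by (rule dist_triangle)
    also have "\<dots> \<le> real (b-a) * d + d" using Suc ab assms(1) unfolding dpath_def by (intro add_mono) auto
    also have "\<dots> = real (Suc b - a) * d" using ab by (simp add: Suc_diff_le algebra_simps)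
    finally show ?thesis .
  qed
qed

lemma compress:
  assumes "dpath d0 y l p" "0 < k" "real k * d0 \<le> d" "0 \<le> d0"
  shows "\<exists>p'. dpath d y (l div k + 1) p' \<and> p' ! (l div k + 1) = p ! l"
proof -
  define p' where "p' = map (\<lambda>i. p ! min (k*i) l) [0..<l div k + 2]"
  have kl: "l \<le> k * (l div k + 1)"
  proof -
    have "l mod k < k" using assms(2) by simp
    moreover have "k * (l div k) + l mod k = l" by (rule mult_div_mod_eq)
    moreover have "k * (l div k + 1) = k * (l div k) + k" by simp
    ultimately show ?thesis by linarith
  qed
  have "dist (p' ! i) (p' ! Suc i) \<le> d" if "i < l div k + 1" for i
  proof -
    have e: "p' ! i = p ! min (k*i) l" "p' ! Suc i = p ! min (k*Suc i) l"
      using that by (simp_all add: p'_def nth_append del: upt_Suc)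
    have "dist (p ! min (k*i) l) (p ! min (k*Suc i) l) \<le> real (min (k*Suc i) l - min (k*i) l) * d0"
      by (rule dpath_dist[OF assms(1)]) auto
    also have "\<dots> \<le> real k * d0"
      by (intro mult_right_mono assms(4)) auto
    finally show ?thesis using e assms(3) by simp
  qed
  moreover have "length p' = Suc (l div k + 1)" by (simp add: p'_def)
  moreover have "p' ! 0 = y" using assms(1) by (simp add: p'_def dpath_def del: upt_Suc)
  moreover have "p' ! (l div k + 1) = p ! l" using kl by (simp add: p'_def del: upt_Suc)
  ultimately show ?thesis unfolding dpath_def by blast
qed


definition pos :: "nat \<Rightarrow> nat \<Rightarrow> nat" where
  "pos L i = (if i \<le> L then i else 2*L - i)"

lemma pos_step:
  assumes "dpath d y L p" "i < 2*L"
  shows "dist (p ! pos L i) (p ! pos L (Suc i)) \<le> d"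
proof (cases "i < L")
  case True
  then show ?thesis using assms unfolding dpath_def pos_def by auto
next
  case False
  then have "pos L i = Suc (2*L - Suc i)" "pos L (Suc i) = 2*L - Suc i" "2*L - Suc i < L"
    using assms(2) by (auto simp: pos_def)
  then show ?thesis using assms(1) unfolding dpath_def by (metis dist_commute)
qed

lemma walk_count:
  fixes x0 y :: "'a::metric_space"
  assumes R: "0 \<le> R" and L: "0 < L" and d: "0 \<le> d"
    and p0: "dpath d x0 m p0" "p0 ! m = y"
    and Q: "finite Q" "\<And>q. q \<in> Q \<Longrightarrow> dpath d y L (fw q) \<and> fw q ! L = q"
    and sep: "\<And>q q'. q \<in> Q \<Longrightarrow> q' \<in> Q \<Longrightarrow> q \<noteq> q' \<Longrightarrow> dist q q' > R"
    and n: "m + 2*L*j \<le> n"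
  shows "enat (card Q ^ j) \<le> sep_count n R d x0"
proof -
  define f where "f s t = (if t < m then p0 ! t else if (t - m) div (2*L) < j
     then fw (s ((t-m) div (2*L))) ! pos L ((t - m) mod (2*L)) else y)" for s :: "nat \<Rightarrow> 'a" and t
  define S where "S = PiE {..<j} (\<lambda>_. Q)"
  define g where "g s = map (f s) [0..<Suc n]" for s
  have fwy: "fw q ! 0 = y" if "q \<in> Q" for q using Q(2)[OF that] unfolding dpath_def by auto
  have step: "dist (f s t) (f s (Suc t)) \<le> d" if s: "s \<in> S" and t: "t < n" for s t
  proof -
    consider "Suc t < m" | "Suc t = m" | "m \<le> t" by linarith
    then show ?thesis
    proof cases
      case 1 then show ?thesis using p0 t unfolding f_def dpath_def by auto
    next
      case 2
      have "f s (Suc t) = y"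
      proof (cases "0 < j")
        case True
        then have "s 0 \<in> Q" using s unfolding S_def by auto
        then show ?thesis using 2 True fwy by (simp add: f_def pos_def)
      qed (use 2 in \<open>simp add: f_def\<close>)
      moreover have "f s t = p0 ! t" using 2 by (simp add: f_def)
      ultimately show ?thesis using p0 2 unfolding dpath_def by auto
    next
      case 3
      define u where "u = t - m"
      have su: "Suc t - m = Suc u" using 3 by (simp add: u_def)
      have ft: "f s t = (if u div (2*L) < j then fw (s (u div (2*L))) ! pos L (u mod (2*L)) else y)"
        using 3 by (simp add: f_def u_def)
      have fst: "f s (Suc t) = (if Suc u div (2*L) < j then fw (s (Suc u div (2*L))) ! pos L (Suc u mod (2*L)) else y)"
        using 3 su by (simp add: f_def)
      have ml: "u mod (2*L) < 2*L" using L by simp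
      show ?thesis
      proof (cases "Suc (u mod (2*L)) = 2*L")
        case True
        then have e1: "Suc u mod (2*L) = 0" "Suc u div (2*L) = Suc (u div (2*L))"
          by (simp_all add: mod_Suc div_Suc)
        have "f s (Suc t) = y"
        proof (cases "Suc (u div (2*L)) < j")
          case True
          then have "s (Suc (u div (2*L))) \<in> Q" using s unfolding S_def by auto
          then show ?thesis using fst e1 True fwy by (simp add: pos_def)
        qed (use fst e1 in simp)
        moreover have "dist (f s t) y \<le> d"
        proof (cases "u div (2*L) < j")
          case True
          then have q: "s (u div (2*L)) \<in> Q" using s unfolding S_def by auto
          have "dist (fw (s (u div (2*L))) ! pos L (u mod (2*L))) (fw (s (u div (2*L))) ! pos L (Suc (u mod (2*L)))) \<le> d"
            by (rule pos_step) (use Q(2)[OF q] ml in auto)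
          moreover have "pos L (Suc (u mod (2*L))) = 0" using True L \<open>Suc (u mod (2*L)) = 2*L\<close> by (simp add: pos_def)
          ultimately show ?thesis using ft True fwy[OF q] by simp
        qed (use ft d in simp)
        ultimately show ?thesis by simp
      next
        case False
        then have e1: "Suc u mod (2*L) = Suc (u mod (2*L))" "Suc u div (2*L) = u div (2*L)"
          by (simp_all add: mod_Suc div_Suc)
        show ?thesis
        proof (cases "u div (2*L) < j")
          case True
          then have q: "s (u div (2*L)) \<in> Q" using s unfolding S_def by auto
          have "dist (fw (s (u div (2*L))) ! pos L (u mod (2*L))) (fw (s (u div (2*L))) ! pos L (Suc (u mod (2*L)))) \<le> d"
            by (rule pos_step) (use Q(2)[OF q] ml False in auto)
          then show ?thesis using ft fst e1 True by simp
        qed (use ft fst e1 d in simp)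
      qed
    qed
  qed
  have f0: "f s 0 = x0" if s: "s \<in> S" for s
  proof (cases "0 < m")
    case True then show ?thesis using p0 by (simp add: f_def dpath_def)
  next
    case False
    then have "m = 0" by simp
    then have y: "y = x0" using p0 by (simp add: dpath_def)
    show ?thesis
    proof (cases "0 < j")
      case True
      then have "s 0 \<in> Q" using s unfolding S_def by auto
      then show ?thesis using \<open>m = 0\<close> True fwy y by (simp add: f_def pos_def)
    qed (use \<open>m = 0\<close> y in \<open>simp add: f_def\<close>)
  qed
  have dp: "dpath d x0 n (g s)" if "s \<in> S" for s
    unfolding dpath_def g_def using step[OF that] f0[OF that]
    by (simp del: upt_Suc)
  have fb: "f s (m + 2*L*b + L) = s b" if s: "s \<in> S" and b: "b < j" for s b
  proof -
    have e: "(2*L*b + L) div (2*L) = b" "(2*L*b + L) mod (2*L) = L" using L by (simp_all add: mult.commute)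
    have "s b \<in> Q" using s b unfolding S_def by auto
    then show ?thesis using e b Q(2) by (simp add: f_def pos_def)
  qed
  have tb: "m + 2*L*b + L \<le> n" if "b < j" for b
  proof -
    have "Suc b \<le> j" using that by simp
    then have "2*L*Suc b \<le> 2*L*j" by (rule mult_le_mono2)
    then have "2*L*b + L \<le> 2*L*j" by simp
    then show ?thesis using n by linarith
  qed
  have sepg: "pathdist n (g s) (g s') > R" if "s \<in> S" "s' \<in> S" "s \<noteq> s'" for s s'
  proof -
    have "\<exists>b<j. s b \<noteq> s' b"
    proof (rule ccontr)
      assume "\<not> (\<exists>b<j. s b \<noteq> s' b)"
      then have "s = s'" using that(1,2) unfolding S_def
        by (intro PiE_ext[of s "{..<j}" "\<lambda>_. Q" s']) auto
      then show False using that(3) by simp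
    qed
    then obtain b where b: "b < j" "s b \<noteq> s' b" by blast
    have q: "s b \<in> Q" "s' b \<in> Q" using that b unfolding S_def by auto
    have "g s ! (m + 2*L*b + L) = s b" "g s' ! (m + 2*L*b + L) = s' b"
      using fb that b tb[OF b(1)] by (simp_all add: g_def less_Suc_eq_le del: upt_Suc)
    then have "dist (g s ! (m + 2*L*b + L)) (g s' ! (m + 2*L*b + L)) > R" using sep q b by simp
    also have "\<dots> \<le> pathdist n (g s) (g s')" unfolding pathdist_def
      by (rule Max_ge) (use tb[OF b(1)] in auto)
    finally show ?thesis .
  qed
  have inj: "inj_on g S"
  proof
    fix s s' assume "s \<in> S" "s' \<in> S" "g s = g s'"
    then show "s = s'" using sepg[of s s'] R unfolding pathdist_def
      by (cases "s = s'") (auto)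
  qed
  have fin: "finite (g ` S)" using Q(1) unfolding S_def by (simp add: finite_PiE)
  have sp: "separated_paths R d x0 n (g ` S)" unfolding separated_paths_def using dp sepg by auto
  have "card (g ` S) = card Q ^ j" using card_image[OF inj] Q(1) unfolding S_def by (simp add: card_PiE)
  then show ?thesis unfolding sep_count_def using fin sp by (metis (mono_tags, lifting) SUP_upper mem_Collect_eq)
qed


lemma dpath_append:
  assumes "dpath d x a p" "p ! a = y" "dpath d y b q"
  shows "dpath d x (a+b) (p @ tl q) \<and> (p @ tl q) ! (a+b) = q ! b"
proof -
  have lp: "length p = Suc a" and lq: "length q = Suc b" using assms unfolding dpath_def by auto
  have nth: "(p @ tl q) ! i = (if i \<le> a then p ! i else q ! (i - a))" if "i \<le> a + b" for i
    using that lp lq by (auto simp: nth_append nth_tl intro!: arg_cong[where f="(!) q"])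
  have q0: "q ! 0 = y" using assms(3) unfolding dpath_def by auto
  have "dist ((p @ tl q) ! i) ((p @ tl q) ! Suc i) \<le> d" if i: "i < a + b" for i
  proof (cases "i < a")
    case True then show ?thesis using nth i assms(1) unfolding dpath_def by auto
  next
    case False
    then have "i - a < b" "Suc i - a = Suc (i - a)" using i by auto
    then show ?thesis using nth[of i] nth[of "Suc i"] i False assms(3) q0 assms(2) unfolding dpath_def
      by (cases "i = a") auto
  qed
  moreover have "(p @ tl q) ! 0 = x" using nth[of 0] assms(1) unfolding dpath_def by auto
  moreover have "length (p @ tl q) = Suc (a+b)" using lp lq by simp
  moreover have "(p @ tl q) ! (a+b) = q ! b" using nth[of "a+b"] assms(2) q0 by (cases b) auto
  ultimately show ?thesis unfolding dpath_def by auto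
qed

lemma dcomp_trans:
  assumes "y \<in> dcomp d x" "z \<in> dball d y l" shows "z \<in> dcomp d x"
proof -
  obtain a p where p: "dpath d x a p" "p ! a = y" using assms(1) unfolding dcomp_def dball_def by auto
  obtain q where q: "dpath d y l q" "q ! l = z" using assms(2) unfolding dball_def by auto
  show ?thesis using dpath_append[OF p q(1)] q(2) unfolding dcomp_def dball_def by blast
qed

lemma dcomp_mono: "y \<in> dcomp d x \<Longrightarrow> d \<le> d' \<Longrightarrow> y \<in> dcomp d' x"
  unfolding dcomp_def dball_def using dpath_mono by blast

lemma cball_dball: "cball z R \<subseteq> dball R z 1"
proof
  fix w assume "w \<in> cball z R"
  then have "dpath R z 1 [z, w]" by (simp add: dpath_def dist_commute)
  then show "w \<in> dball R z 1" unfolding dball_def by force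
qed

lemma outer_mu_le: "A \<in> sets \<mu> \<Longrightarrow> B \<subseteq> A \<Longrightarrow> outer_mu \<mu> B \<le> emeasure \<mu> A"
  unfolding outer_mu_def by (rule INF_lower) auto

lemma emeasure_le_outer: "A \<in> sets \<mu> \<Longrightarrow> A \<subseteq> B \<Longrightarrow> emeasure \<mu> A \<le> outer_mu \<mu> B"
  unfolding outer_mu_def by (rule INF_greatest) (auto intro: emeasure_mono)

lemma sep_points:
  fixes \<mu> :: "'a::metric_space measure"
  assumes borel: "sets \<mu> = sets borel"
    and C: "\<And>z. z \<in> B \<Longrightarrow> emeasure \<mu> (cball z R) \<le> C"
    and K: "of_nat K * C < outer_mu \<mu> B" and R: "0 \<le> R"
  shows "\<exists>Q. Q \<subseteq> B \<and> finite Q \<and> K \<le> card Q \<and> (\<forall>q\<in>Q. \<forall>q'\<in>Q. q \<noteq> q' \<longrightarrow> dist q q' > R)"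
proof (rule ccontr)
  assume neg: "\<not> ?thesis"
  define F where "F = {Q. Q \<subseteq> B \<and> finite Q \<and> card Q \<le> K \<and> (\<forall>q\<in>Q. \<forall>q'\<in>Q. q \<noteq> q' \<longrightarrow> dist q q' > R)}"
  have "{} \<in> F" unfolding F_def by auto
  have fin: "finite (card ` F)" by (rule finite_subset[of _ "{..K}"]) (auto simp: F_def)
  define n where "n = Max (card ` F)"
  have "n \<in> card ` F" unfolding n_def using fin \<open>{} \<in> F\<close> by (intro Max_in) auto
  then obtain Q where Q: "Q \<in> F" "card Q = n" by auto
  have maxQ: "card Q' \<le> card Q" if "Q' \<in> F" for Q' using Q fin that n_def by auto
  have QB: "Q \<subseteq> B" "finite Q" "card Q \<le> K" and Qs: "\<forall>q\<in>Q. \<forall>q'\<in>Q. q \<noteq> q' \<longrightarrow> dist q q' > R"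
    using Q(1) unfolding F_def by auto
  have lt: "card Q < K" using neg QB Qs by force
  have cov: "B \<subseteq> (\<Union>q\<in>Q. cball q R)"
  proof
    fix b assume b: "b \<in> B"
    show "b \<in> (\<Union>q\<in>Q. cball q R)"
    proof (rule ccontr)
      assume "b \<notin> (\<Union>q\<in>Q. cball q R)"
      then have far: "\<forall>q\<in>Q. dist q b > R" by (auto simp: dist_commute)
      then have "b \<notin> Q" using R by force
      have "insert b Q \<in> F" unfolding F_def using QB Qs far lt b \<open>b \<notin> Q\<close>
        by (auto simp: dist_commute)
      then have "card (insert b Q) \<le> card Q" by (rule maxQ)
      then show False using \<open>b \<notin> Q\<close> QB(2) by simp
    qed
  qed
  have meas: "cball q R \<in> sets \<mu>" for q using borel by simp
  have "outer_mu \<mu> B \<le> emeasure \<mu> (\<Union>q\<in>Q. cball q R)"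
    by (rule outer_mu_le[OF _ cov]) (use meas QB(2) in auto)
  also have "\<dots> \<le> (\<Sum>q\<in>Q. emeasure \<mu> (cball q R))"
    by (rule emeasure_subadditive_finite) (use meas QB(2) in auto)
  also have "\<dots> \<le> (\<Sum>q\<in>Q. C)" by (rule sum_mono) (use C QB(1) in auto)
  also have "\<dots> = of_nat (card Q) * C" by simp
  also have "\<dots> \<le> of_nat K * C" using lt by (intro mult_right_mono) auto
  finally show False using K by simp
qed


lemma eln_mono: "a \<le> b \<Longrightarrow> eln a \<le> eln b"
  unfolding eln_def
  by (cases a; cases b) auto

lemma enat_ln_mono: "a \<le> b \<Longrightarrow> enat_ln a \<le> enat_ln b"
  unfolding enat_ln_def by (intro eln_mono) simp

lemma enat_ln_pow: "1 \<le> N \<Longrightarrow> enat_ln (enat (N ^ j)) = ereal (real j * ln (real N))"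
proof -
  assume N: "1 \<le> N"
  then have "0 < real N ^ j" by simp
  then have "\<not> real N ^ j \<le> 0" by linarith
  then show ?thesis unfolding enat_ln_def eln_def using N by (simp add: ln_realpow)
qed

lemma sep_count_anti: "R \<le> R' \<Longrightarrow> sep_count n R' d x0 \<le> sep_count n R d x0"
  unfolding sep_count_def separated_paths_def
  by (rule SUP_subset_mono) force+


lemma key:
  fixes \<mu> :: "'a::metric_space measure" and x x0 :: 'a
  assumes borel: "sets \<mu> = sets borel"
    and finite_vol: "\<And>\<delta> l. \<delta> > 0 \<Longrightarrow> vol \<mu> \<delta> x l < \<infinity>"
    and c: "0 < c" and d0: "0 < \<delta>0"
    and freq: "\<forall>N. \<exists>l\<ge>N. ennreal (exp (c * real l)) < vol \<mu> \<delta>0 x l"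
    and k: "0 < k" and dk: "real k * \<delta>0 \<le> \<delta>" and dd0: "\<delta>0 \<le> \<delta>" and dx: "dist x0 x \<le> \<delta>"
    and R: "\<delta>0 \<le> R"
  shows "ereal (c * real k / 16) \<le> limsup (\<lambda>n. ereal (1 / real n) * enat_ln (sep_count n R \<delta> x0))"
proof -
  have Rpos: "0 < R" using R d0 by simp
  define C where "C = enn2real (vol \<mu> R x 1)"
  have C0: "0 \<le> C" by (simp add: C_def)
  have vC: "vol \<mu> R x 1 = ennreal C" unfolding C_def using finite_vol[OF Rpos, of 1] by (simp add: ennreal_enn2real_if less_top)
  have Cb: "emeasure \<mu> (cball z R) \<le> ennreal C" if "z \<in> dcomp R x" for z
  proof -
    have "emeasure \<mu> (cball z R) \<le> outer_mu \<mu> (dball R z 1)"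
      by (rule emeasure_le_outer) (use borel cball_dball in auto)
    also have "\<dots> \<le> vol \<mu> R x 1" unfolding vol_def by (rule SUP_upper) (use that in auto)
    finally show ?thesis using vC by simp
  qed
  define N0 where "N0 = k + nat \<lceil>(2/c) * ln (2*(C+1))\<rceil> + 1"
  obtain l where lN: "l \<ge> N0" and vl: "ennreal (exp (c * real l)) < vol \<mu> \<delta>0 x l" using freq by blast
  have lk: "k \<le> l" using lN by (simp add: N0_def)
  have lpos: "0 < l" using lk k by simp
  have "(2/c) * ln (2*(C+1)) < real l" using lN unfolding N0_def by linarith
  then have "ln (2*(C+1)) < c * real l / 2" using c by (simp add: field_simps)
  moreover have "0 < 2*(C+1)" using C0 by simp
  ultimately have big: "2*(C+1) < exp (c * real l / 2)" using exp_less_mono[of "ln (2*(C+1))" "c * real l / 2"] by simp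
  obtain y where y: "y \<in> dcomp \<delta>0 x" and oy: "ennreal (exp (c * real l)) < outer_mu \<mu> (dball \<delta>0 y l)"
    using vl unfolding vol_def less_SUP_iff by blast
  define E where "E = exp (c * real l / 2)"
  have E1: "1 \<le> E" unfolding E_def using c by simp
  have EE: "E * E = exp (c * real l)" unfolding E_def by (simp flip: exp_add)
  define K where "K = nat \<lceil>E\<rceil>"
  have K1: "E \<le> real K" "real K < E + 1" unfolding K_def using E1 by linarith+
  have "real K * C \<le> real K * (C + 1)" using C0 by (intro mult_left_mono) auto
  also have "\<dots> < (E + 1) * (C + 1)" using K1 C0 by (intro mult_strict_right_mono) auto
  also have "\<dots> \<le> (2 * E) * (C + 1)" using E1 C0 by (intro mult_right_mono) auto
  also have "\<dots> = E * (2 * (C+1))" by simp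
  also have "\<dots> < E * E" using big E1 unfolding E_def by simp
  finally have KCr: "real K * C < exp (c * real l)" using EE by simp
  have KC: "of_nat K * ennreal C < outer_mu \<mu> (dball \<delta>0 y l)"
  proof -
    have "of_nat K * ennreal C = ennreal (real K * C)" using C0 by (simp add: ennreal_mult ennreal_of_nat_eq_real_of_nat)
    also have "\<dots> < ennreal (exp (c * real l))" using KCr by (intro ennreal_lessI) auto
    finally show ?thesis using oy by simp
  qed
  have Cz: "emeasure \<mu> (cball z R) \<le> ennreal C" if "z \<in> dball \<delta>0 y l" for z
    using Cb dcomp_mono[OF dcomp_trans[OF y that] R] by blast
  obtain Q where Q: "Q \<subseteq> dball \<delta>0 y l" "finite Q" "K \<le> card Q"
      and Qs: "\<forall>q\<in>Q. \<forall>q'\<in>Q. q \<noteq> q' \<longrightarrow> dist q q' > R"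
    using sep_points[OF borel Cz KC] Rpos by auto
  define L where "L = l div k + 1"
  have ex_fw: "\<exists>p'. dpath \<delta> y L p' \<and> p' ! L = q" if qQ: "q \<in> Q" for q
  proof -
    obtain p where p: "dpath \<delta>0 y l p" "p ! l = q" using Q(1) qQ unfolding dball_def by auto
    show ?thesis using compress[OF p(1) k dk] d0 p(2) unfolding L_def by auto
  qed
  define fw where "fw q = (SOME p'. dpath \<delta> y L p' \<and> p' ! L = q)" for q
  have fw: "dpath \<delta> y L (fw q) \<and> fw q ! L = q" if "q \<in> Q" for q
    unfolding fw_def using someI_ex[OF ex_fw[OF that]] .
  obtain m1 p1 where p1: "dpath \<delta>0 x m1 p1" "p1 ! m1 = y" using y unfolding dcomp_def dball_def by auto
  have "dpath \<delta> x0 1 [x0, x]" using dx by (simp add: dpath_def)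
  from dpath_append[OF this _ dpath_mono[OF p1(1) dd0]]
  obtain p0 where p0: "dpath \<delta> x0 (Suc m1) p0" "p0 ! Suc m1 = y" using p1(2) by fastforce
  have Lpos: "0 < L" by (simp add: L_def)
  have dpos: "0 \<le> \<delta>" using dd0 d0 by simp
  have walk: "enat (card Q ^ j) \<le> sep_count n R \<delta> x0" if "Suc m1 + 2*L*j \<le> n" for n j
    by (rule walk_count[OF _ Lpos dpos p0 Q(2) fw _ that]) (use Rpos Qs in auto)
  define N where "N = card Q"
  have N1: "1 \<le> N" and EN: "E \<le> real N" using K1 Q(3) E1 unfolding N_def by linarith+
  have lnN: "c * real l / 2 \<le> ln (real N)"
  proof -
    have "ln E \<le> ln (real N)" using EN E1 by simp
    then show ?thesis unfolding E_def by simp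
  qed
  have Lk: "real L * real k \<le> 2 * real l"
  proof -
    have "l div k * k \<le> l" by simp
    moreover have "L * k = l div k * k + k" unfolding L_def by simp
    ultimately have "L * k \<le> 2 * l" using lk by linarith
    then show ?thesis by (simp flip: of_nat_mult)
  qed
  have ev: "ereal (c * real k / 16) \<le> ereal (1 / real n) * enat_ln (sep_count n R \<delta> x0)"
    if n: "n \<ge> 2 * Suc m1 + 4 * L + 1" for n
  proof -
    define j where "j = (n - Suc m1) div (2*L)"
    have t: "2*L*j \<le> n - Suc m1" unfolding j_def by (metis le_add1 mult_div_mod_eq)
    have jn: "Suc m1 + 2*L*j \<le> n" using t n by (subst (asm) le_diff_conv2) auto
    have "(n - Suc m1) mod (2*L) < 2*L" using Lpos by simp
    moreover have "2*L*j + (n - Suc m1) mod (2*L) = n - Suc m1" unfolding j_def by simp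
    moreover have aux: "A + r = nn - mm \<Longrightarrow> r < B \<Longrightarrow> 2*mm + 2*B + 1 \<le> nn \<Longrightarrow> nn \<le> 2*A"
      for A B r nn mm :: nat by arith
    ultimately have "n \<le> 2*(2*L*j)" using n by (intro aux[of "2*L*j" "(n - Suc m1) mod (2*L)" n "Suc m1" "2*L"]) auto
    then have jn4: "n \<le> 4*L*j" by simp
    have npos: "0 < n" using n by simp
    have "enat_ln (enat (N ^ j)) \<le> enat_ln (sep_count n R \<delta> x0)"
      using walk[OF jn] unfolding N_def by (rule enat_ln_mono)
    then have A: "ereal (1 / real n) * ereal (real j * ln (real N)) \<le> ereal (1 / real n) * enat_ln (sep_count n R \<delta> x0)"
      using enat_ln_pow[OF N1] by (intro ereal_mult_left_mono) auto
    have B: "c * real k / 16 \<le> (1 / real n) * (real j * ln (real N))"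
    proof -
      have a: "real n \<le> 4 * real L * real j" using of_nat_mono[OF jn4, where 'a=real] by simp
      have lp: "0 < real l" using lpos by simp
      have "c * real k / 16 = (c * real l / 2) * (real k / (8 * real l))" using lp by (simp add: field_simps)
      also have "\<dots> \<le> (c * real l / 2) * (1 / (4 * real L))"
        using Lk Lpos lp c by (intro mult_left_mono) (auto simp: field_simps)
      also have "\<dots> \<le> ln (real N) * (1 / (4 * real L))"
        using lnN Lpos by (intro mult_right_mono) auto
      also have "\<dots> \<le> ln (real N) * (real j / real n)"
        using a Lpos npos lnN c lp by (intro mult_left_mono) (auto simp: field_simps intro: order_trans[of 0 "c * real l / 2"])
      also have "\<dots> = (1 / real n) * (real j * ln (real N))" by simp
      finally show ?thesis .
    qed
    have "ereal (c * real k / 16) \<le> ereal ((1 / real n) * (real j * ln (real N)))" using B by simp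
    also have "\<dots> = ereal (1 / real n) * ereal (real j * ln (real N))" by simp
    also have "\<dots> \<le> ereal (1 / real n) * enat_ln (sep_count n R \<delta> x0)" by (rule A)
    finally show ?thesis .
  qed
  show ?thesis
    by (rule le_Limsup) (use ev in \<open>auto simp: eventually_sequentially\<close>)
qed


lemma antitone_tendsto:
  fixes h :: "real \<Rightarrow> ereal"
  assumes "\<And>a b. a \<le> b \<Longrightarrow> h b \<le> h a"
  shows "(h \<longlongrightarrow> (INF R. h R)) at_top"
proof (rule order_tendstoI)
  fix a assume "a < (INF R. h R)"
  then show "eventually (\<lambda>R. a < h R) at_top"
    by (intro always_eventually allI) (meson INF_lower UNIV_I order_less_le_trans)
next
  fix a assume "(INF R. h R) < a"
  then obtain R0 where "h R0 < a" by (auto simp: INF_less_iff)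
  then show "eventually (\<lambda>R. h R < a) at_top"
    unfolding eventually_at_top_linorder using assms by (meson order_le_less_trans)
qed

theorem mainTheorem13:
  fixes \<mu> :: "'a::metric_space measure" and x x0 :: 'a
  assumes borel: "sets \<mu> = sets borel"
    and finite_vol: "\<And>\<delta> l. \<delta> > 0 \<Longrightarrow> vol \<mu> \<delta> x l < \<infinity>"
    and growth: "\<exists>\<delta>0>0. limsup (\<lambda>l. ereal (1 / real l) * eln (enn2ereal (vol \<mu> \<delta>0 x l))) > 0"
  shows "coarse_entropy x0 = \<infinity>"
proof -
  obtain \<delta>0 where d0: "0 < \<delta>0" and lim: "limsup (\<lambda>l. ereal (1 / real l) * eln (enn2ereal (vol \<mu> \<delta>0 x l))) > 0"
    using growth by blast
  define u where "u l = ereal (1 / real l) * eln (enn2ereal (vol \<mu> \<delta>0 x l))" for l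
  obtain c where c0: "0 < ereal c" and cl: "ereal c < limsup u"
    using ereal_dense2[OF lim[folded u_def]] by blast
  have c: "0 < c" using c0 by simp
  have freq: "\<forall>N. \<exists>l\<ge>N. ennreal (exp (c * real l)) < vol \<mu> \<delta>0 x l"
  proof
    fix N
    have "\<exists>l\<ge>N. u l > ereal c"
    proof (rule ccontr)
      assume "\<not> ?thesis"
      then have "eventually (\<lambda>l. u l \<le> ereal c) sequentially"
        unfolding eventually_sequentially by (meson not_le)
      then have "limsup u \<le> ereal c" by (rule Limsup_bounded)
      then show False using cl by simp
    qed
    then obtain l where l: "l \<ge> N" "u l > ereal c" by blast
    have lpos: "0 < l" using l c by (cases "l = 0") (auto simp: u_def zero_ereal_def[symmetric])
    define v where "v = vol \<mu> \<delta>0 x l"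
    have vfin: "v < \<infinity>" using finite_vol[OF d0] by (simp add: v_def)
    define r where "r = enn2real v"
    have vr: "v = ennreal r" "r \<ge> 0" unfolding r_def using vfin by (auto simp: ennreal_enn2real_if less_top)
    have ul: "u l = ereal (1 / real l) * eln (ereal r)" unfolding u_def v_def[symmetric] using vr by simp
    have rpos: "0 < r"
    proof (rule ccontr)
      assume "\<not> 0 < r"
      then have "eln (ereal r) = -\<infinity>" unfolding eln_def by auto
      then show False using l(2) ul lpos by simp
    qed
    then have "u l = ereal (ln r / real l)" using ul unfolding eln_def by simp
    then have "c < ln r / real l" using l(2) by simp
    then have "c * real l < ln r" using lpos by (simp add: field_simps)
    then have "exp (c * real l) < r" using rpos exp_less_mono[of "c * real l" "ln r"] by simp
    then have "ennreal (exp (c * real l)) < v" using vr by (simp add: ennreal_less_iff)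
    then show "\<exists>l\<ge>N. ennreal (exp (c * real l)) < vol \<mu> \<delta>0 x l" using l(1) v_def by blast
  qed
  define h where "h \<delta> R = limsup (\<lambda>n. ereal (1 / real n) * enat_ln (sep_count n R \<delta> x0))" for \<delta> R
  have hanti: "h \<delta> R' \<le> h \<delta> R" if "R \<le> R'" for \<delta> R R'
    unfolding h_def
    by (rule Limsup_mono, rule always_eventually, intro allI ereal_mult_left_mono enat_ln_mono sep_count_anti that) simp
  have hlim: "Lim at_top (h \<delta>) = (INF R. h \<delta> R)" for \<delta>
    by (rule tendsto_Lim) (auto intro: antitone_tendsto hanti)
  have "((\<lambda>\<delta>. Lim at_top (h \<delta>)) \<longlongrightarrow> \<infinity>) at_top"
    unfolding tendsto_PInfty
  proof
    fix M :: real
    define k where "k = nat \<lceil>16 * (\<bar>M\<bar> + 1) / c\<rceil> + 1"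
    have k: "0 < k" by (simp add: k_def)
    have kM: "M < c * real k / 16"
    proof -
      have "16 * (\<bar>M\<bar> + 1) / c < real k" unfolding k_def by linarith
      then have "16 * (\<bar>M\<bar> + 1) < c * real k" using c by (simp add: field_simps)
      then show ?thesis by (simp add: field_simps)
    qed
    show "eventually (\<lambda>\<delta>. ereal M < Lim at_top (h \<delta>)) at_top"
      unfolding eventually_at_top_linorder
    proof (intro exI allI impI)
      fix \<delta> assume dD: "real k * \<delta>0 + \<delta>0 + dist x0 x \<le> \<delta>"
      have dk: "real k * \<delta>0 \<le> \<delta>" "\<delta>0 \<le> \<delta>" "dist x0 x \<le> \<delta>"
      proof -
        have "0 \<le> real k * \<delta>0" using d0 by simp
        moreover have "0 \<le> dist x0 x" by simp
        ultimately show "real k * \<delta>0 \<le> \<delta>" "\<delta>0 \<le> \<delta>" "dist x0 x \<le> \<delta>" using dD d0 by linarith+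
      qed
      have hR: "ereal (c * real k / 16) \<le> h \<delta> R" if "\<delta>0 \<le> R" for R
        unfolding h_def by (rule key[OF borel finite_vol c d0 freq k dk that])
      have "ereal (c * real k / 16) \<le> h \<delta> R" for R
      proof (cases "\<delta>0 \<le> R")
        case False
        then show ?thesis using hR[of \<delta>0] hanti[of R \<delta>0 \<delta>] by simp
      qed (rule hR)
      then have "ereal (c * real k / 16) \<le> (INF R. h \<delta> R)" by (rule INF_greatest)
      moreover have "ereal M < ereal (c * real k / 16)" using kM by simp
      ultimately show "ereal M < Lim at_top (h \<delta>)" using hlim[of \<delta>]
        by (metis order_less_le_trans)
    qed
  qed
  then have "Lim at_top (\<lambda>\<delta>. Lim at_top (h \<delta>)) = \<infinity>" by (rule tendsto_Lim[rotated]) simp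
  then show ?thesis unfolding coarse_entropy_def h_def .
qed
end
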